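(* Let $n\ge 3$ and $V=\{d\in\{0,1\}^n: d_n=0\}$. For $\epsilon\in\{\text{even},\text{odd}\}$ let $V_\epsilon\subseteq V$ be the words whose number of digits $1$ has parity $\epsilon$, and let $\Gamma_\epsilon$ be the directed graph on $V_\epsilon$ whose arrows are: (i) every arrow of $L_n$ between two elements of $V_\epsilon$, and (ii) the additional arrows $d_1\dots d_{n-3}\,000\to d_1\dots d_{n-3}\,110$ whenever both ends lie in $V_\epsilon$. Then $V=V_{\text{even}}\sqcup V_{\text{odd}}$, every arrow of $L_n$ between elements of $V$ joins words of the same parity, and for each $\epsilon$ the map $d_1\dots d_{n-2}d_{n-1}0\mapsto d_1\dots d_{n-2}$ is an isomorphism of directed graphs $\Gamma_\epsilon\to L_{n-2}$.
   Context: For $m\ge 1$, $L_m$ is the directed graph on $\{0,1\}^m$ with arrows $u\,01\,v\to u\,10\,v$ (binary words $u,v$, $|u|+|v|=m-2$) and $u0\to u1$ ($|u|=m-1$); it is isomorphic (via Lascoux–Schützenberger notation) to the regular Hasse diagram of the Lagrangian Grassmannian of rank $m$. $V$ corresponds to the singular Hasse diagram $W^{\mathfrak{p},\{\alpha_n\}}$, and the arrows (ii) correspond to non-standard invariant differential operators constructed via the Penrose transform. *)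

theory Defs
  imports Main
begin

text \<open>Binary words are lists of booleans (False = 0, True = 1).\<close>

definition L_verts :: "nat \<Rightarrow> bool list set" where
  "L_verts m = {w. length w = m}"

definition L_edges :: "nat \<Rightarrow> (bool list \<times> bool list) set" where
  "L_edges m =
     {(u @ [False, True] @ v, u @ [True, False] @ v) | u v. length u + length v + 2 = m}
   \<union> {(u @ [False], u @ [True]) | u. length u + 1 = m}"

definition ones :: "bool list \<Rightarrow> nat" where
  "ones w = length (filter id w)"

definition Vset :: "nat \<Rightarrow> bool list set" where
  "Vset n = {w. length w = n \<and> last w = False}"

definition V_par :: "nat \<Rightarrow> bool \<Rightarrow> bool list set" where
  "V_par n b = {w \<in> Vset n. odd (ones w) = b}"

definition Gamma_edges :: "nat \<Rightarrow> bool \<Rightarrow> (bool list \<times> bool list) set" where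
  "Gamma_edges n b =
     {(x, y). x \<in> V_par n b \<and> y \<in> V_par n b \<and>
        ((x, y) \<in> L_edges n \<or>
         (\<exists>u. length u + 3 = n \<and> x = u @ [False, False, False] \<and> y = u @ [True, True, False]))}"

definition digraph_iso ::
  "('a \<Rightarrow> 'b) \<Rightarrow> 'a set \<Rightarrow> ('a \<times> 'a) set \<Rightarrow> 'b set \<Rightarrow> ('b \<times> 'b) set \<Rightarrow> bool" where
  "digraph_iso f A E B F \<longleftrightarrow> bij_betw f A B \<and>
     (\<forall>x\<in>A. \<forall>y\<in>A. (x, y) \<in> E \<longleftrightarrow> (f x, f y) \<in> F)"

end

theory Submission imports Defs begin

definition SW :: "nat \<Rightarrow> (bool list \<times> bool list) set" where
  "SW m = {(u @ [False, True] @ v, u @ [True, False] @ v) | u v. length u + length v + 2 = m}"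

lemma L_edges_alt: "L_edges m = SW m \<union> {(u @ [False], u @ [True]) | u. length u + 1 = m}"
  unfolding L_edges_def SW_def by simp

lemma ones_app[simp]: "ones (xs @ ys) = ones xs + ones ys"
  by (simp add: ones_def)
lemma ones_Cons[simp]: "ones (x # xs) = (if x then 1 else 0) + ones xs"
  by (simp add: ones_def)
lemma ones_Nil[simp]: "ones [] = 0" by (simp add: ones_def)

lemma SW_ones: "(x,y) \<in> SW m \<Longrightarrow> ones x = ones y \<and> length x = m \<and> length y = m"
  unfolding SW_def by auto

lemma lemA:
  assumes "length p = m" "length q = m"
  shows "(p@[a,False], q@[c,False]) \<in> L_edges (m+2) \<longleftrightarrow>
    (a = c \<and> (p,q) \<in> SW m) \<or> (\<exists>u. p = u@[False] \<and> q = u@[True] \<and> a \<and> \<not> c)"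
proof
  assume "(p@[a,False], q@[c,False]) \<in> L_edges (m+2)"
  then show "(a = c \<and> (p,q) \<in> SW m) \<or> (\<exists>u. p = u@[False] \<and> q = u@[True] \<and> a \<and> \<not> c)"
    unfolding L_edges_def
  proof (elim UnE CollectE exE conjE)
    fix u v assume e: "(p @ [a, False], q @ [c, False]) = (u @ [False, True] @ v, u @ [True, False] @ v)"
      and l: "length u + length v + 2 = m + 2"
    show ?thesis
    proof (cases v rule: rev_exhaust)
      case Nil then show ?thesis using e by auto
    next
      case (snoc v' z)
      then have e2: "p @ [a] = u @ [False, True] @ v'" "q @ [c] = u @ [True, False] @ v'"
        using e by auto
      show ?thesis
      proof (cases v' rule: rev_exhaust)
        case Nil then show ?thesis using e2 by auto
      next
        case (snoc v'' z')
        then have "p = u @ [False, True] @ v''" "q = u @ [True, False] @ v''" "a = z'" "c = z'"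
          using e2 by auto
        then show ?thesis using assms unfolding SW_def by auto
      qed
    qed
  next
    fix u assume "(p @ [a, False], q @ [c, False]) = (u @ [False], u @ [True])"
    then show ?thesis by auto
  qed
next
  assume "(a = c \<and> (p,q) \<in> SW m) \<or> (\<exists>u. p = u@[False] \<and> q = u@[True] \<and> a \<and> \<not> c)"
  then show "(p@[a,False], q@[c,False]) \<in> L_edges (m+2)"
  proof
    assume "a = c \<and> (p,q) \<in> SW m"
    then obtain u v where "p = u @ [False, True] @ v" "q = u @ [True, False] @ v" "a = c"
        "length u + length v + 2 = m" unfolding SW_def by auto
    then show ?thesis unfolding L_edges_def
      by (intro UnI1 CollectI exI[of _ u] exI[of _ "v @ [a, False]"]) auto
  next
    assume "\<exists>u. p = u@[False] \<and> q = u@[True] \<and> a \<and> \<not> c"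
    then obtain u where "p = u@[False]" "q = u@[True]" "a" "\<not> c" by auto
    then show ?thesis using assms unfolding L_edges_def
      by (intro UnI1 CollectI exI[of _ u] exI[of _ "[False]"]) auto
  qed
qed

definition ext :: "bool \<Rightarrow> bool list \<Rightarrow> bool list" where
  "ext b p = p @ [odd (ones p) \<noteq> b, False]"

lemma ext_in: "length p + 2 = n \<Longrightarrow> ext b p \<in> V_par n b"
  unfolding ext_def V_par_def Vset_def by auto

lemma take_ext: "length p + 2 = n \<Longrightarrow> take (n-2) (ext b p) = p"
  unfolding ext_def by auto

lemma V_par_ext:
  assumes "w \<in> V_par n b" "n \<ge> 3"
  shows "w = ext b (take (n-2) w)"
proof -
  have l: "length w = n" "last w = False" "odd (ones w) = b" using assms unfolding V_par_def Vset_def by auto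
  have "length (drop (n-2) w) = 2" using l assms by auto
  then obtain x y where d: "drop (n-2) w = [x,y]"
    by (metis (no_types, lifting) One_nat_def Suc_1 length_0_conv length_Suc_conv)
  define p where "p = take (n-2) w"
  have w: "w = p @ [x,y]" using d unfolding p_def by (metis append_take_drop_id)
  have "y = False" using l(2) w by simp
  with w have w2: "w = p @ [x,False]" by simp
  have tp: "take (n-2) w = p" by (simp add: p_def)
  have "p @ [x, False] = ext b p" using l(3) unfolding ext_def w2 by (cases x) auto
  then show ?thesis using w2 tp by simp
qed

lemma edge_ext:
  assumes "length p = m" "length q = m" "m \<ge> 1"
  shows "(ext b p, ext b q) \<in> Gamma_edges (m+2) b \<longleftrightarrow> (p,q) \<in> L_edges m"
proof -
  have inV: "ext b p \<in> V_par (m+2) b" "ext b q \<in> V_par (m+2) b" using ext_in assms by auto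
  have G: "(ext b p, ext b q) \<in> Gamma_edges (m+2) b \<longleftrightarrow>
     (ext b p, ext b q) \<in> L_edges (m+2) \<or>
     (\<exists>u. length u + 3 = m+2 \<and> ext b p = u @ [False, False, False] \<and> ext b q = u @ [True, True, False])"
    using inV unfolding Gamma_edges_def by auto
  have A: "(ext b p, ext b q) \<in> L_edges (m+2) \<longleftrightarrow>
    ((odd (ones p) \<noteq> b) = (odd (ones q) \<noteq> b) \<and> (p,q) \<in> SW m) \<or>
    (\<exists>u. p = u@[False] \<and> q = u@[True] \<and> (odd (ones p) \<noteq> b) \<and> \<not> (odd (ones q) \<noteq> b))"
    unfolding ext_def using lemA[OF assms(1,2)] by simp
  have X: "(\<exists>u. length u + 3 = m+2 \<and> ext b p = u @ [False, False, False] \<and> ext b q = u @ [True, True, False])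
     \<longleftrightarrow> (\<exists>u. p = u@[False] \<and> q = u@[True] \<and> \<not>(odd (ones p) \<noteq> b) \<and> (odd (ones q) \<noteq> b))"
  proof
    assume "\<exists>u. length u + 3 = m+2 \<and> ext b p = u @ [False, False, False] \<and> ext b q = u @ [True, True, False]"
    then obtain u where "ext b p = (u @ [False]) @ [False, False]" "ext b q = (u @ [True]) @ [True, False]" by auto
    then show "\<exists>u. p = u@[False] \<and> q = u@[True] \<and> \<not>(odd (ones p) \<noteq> b) \<and> (odd (ones q) \<noteq> b)"
      unfolding ext_def by (intro exI[of _ u]) (auto simp del: append_assoc)
  next
    assume "\<exists>u. p = u@[False] \<and> q = u@[True] \<and> \<not>(odd (ones p) \<noteq> b) \<and> (odd (ones q) \<noteq> b)"
    then obtain u where "p = u@[False]" "q = u@[True]" "\<not>(odd (ones p) \<noteq> b)" "(odd (ones q) \<noteq> b)" by auto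
    then show "\<exists>u. length u + 3 = m+2 \<and> ext b p = u @ [False, False, False] \<and> ext b q = u @ [True, True, False]"
      using assms unfolding ext_def by (intro exI[of _ u]) auto
  qed
  have "(p,q) \<in> L_edges m \<longleftrightarrow> (p,q) \<in> SW m \<or> (\<exists>u. p = u@[False] \<and> q = u@[True])"
    using assms unfolding L_edges_alt by auto
  moreover have "(p,q) \<in> SW m \<Longrightarrow> ones p = ones q" using SW_ones by blast
  moreover have "p = u@[False] \<Longrightarrow> q = u@[True] \<Longrightarrow> ones q = ones p + 1" for u by simp
  ultimately show ?thesis unfolding G A X by (smt (verit, best) odd_add odd_one)
qed

theorem mainTheorem13:
  fixes n :: nat
  assumes "n \<ge> 3"
  shows "Vset n = V_par n False \<union> V_par n True
    \<and> V_par n False \<inter> V_par n True = {}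
    \<and> (\<forall>x y. x \<in> Vset n \<longrightarrow> y \<in> Vset n \<longrightarrow> (x, y) \<in> L_edges n \<longrightarrow>
          odd (ones x) = odd (ones y))
    \<and> (\<forall>b. digraph_iso (\<lambda>w. take (n - 2) w) (V_par n b) (Gamma_edges n b)
                       (L_verts (n - 2)) (L_edges (n - 2)))"
proof (intro conjI allI impI)
  show "Vset n = V_par n False \<union> V_par n True" unfolding V_par_def by auto
  show "V_par n False \<inter> V_par n True = {}" unfolding V_par_def by auto
next
  fix x y assume "x \<in> Vset n" "y \<in> Vset n" "(x, y) \<in> L_edges n"
  then have "(x, y) \<in> SW n"
  proof -
    have "last y = False" using \<open>y \<in> Vset n\<close> unfolding Vset_def by simp
    moreover have "(x,y) \<in> SW n \<or> (\<exists>u. y = u @ [True])"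
      using \<open>(x, y) \<in> L_edges n\<close> unfolding L_edges_alt by blast
    ultimately show ?thesis by force
  qed
  then show "odd (ones x) = odd (ones y)" using SW_ones by metis
next
  fix b
  define m where "m = n - 2"
  have m: "n = m + 2" "m \<ge> 1" using assms unfolding m_def by auto
  have bij: "bij_betw (\<lambda>w. take (n - 2) w) (V_par n b) (L_verts (n - 2))"
  proof (rule bij_betw_byWitness[where f'="ext b"])
    show "\<forall>a\<in>V_par n b. ext b (take (n - 2) a) = a" using V_par_ext assms by metis
    show "\<forall>a'\<in>L_verts (n - 2). take (n - 2) (ext b a') = a'"
      unfolding L_verts_def ext_def by auto
    show "(\<lambda>w. take (n - 2) w) ` V_par n b \<subseteq> L_verts (n - 2)"
      using m unfolding L_verts_def V_par_def Vset_def by auto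
    show "ext b ` L_verts (n - 2) \<subseteq> V_par n b"
      using ext_in m unfolding L_verts_def by auto
  qed
  have edges: "\<forall>x\<in>V_par n b. \<forall>y\<in>V_par n b. (x, y) \<in> Gamma_edges n b \<longleftrightarrow> (take (n-2) x, take (n-2) y) \<in> L_edges (n-2)"
  proof (intro ballI)
    fix x y assume x: "x \<in> V_par n b" and y: "y \<in> V_par n b"
    define px where "px = take (n-2) x"
    define py where "py = take (n-2) y"
    have ex: "x = ext b px" "y = ext b py" unfolding px_def py_def
      using V_par_ext[OF x assms] V_par_ext[OF y assms] by auto
    have lx: "length px = m" "length py = m"
      using x y m unfolding V_par_def Vset_def px_def py_def by auto
    have "(ext b px, ext b py) \<in> Gamma_edges (m+2) b \<longleftrightarrow> (px, py) \<in> L_edges m"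
      using edge_ext[OF lx m(2)] .
    then show "(x, y) \<in> Gamma_edges n b \<longleftrightarrow> (take (n-2) x, take (n-2) y) \<in> L_edges (n-2)"
      unfolding px_def[symmetric] py_def[symmetric] using ex m(1) by simp
  qed
  show "digraph_iso (\<lambda>w. take (n - 2) w) (V_par n b) (Gamma_edges n b) (L_verts (n - 2)) (L_edges (n - 2))"
    unfolding digraph_iso_def using bij edges by simp
qed

end
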